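(* Let $\mathbb F$ be a field and $f(x)$ a nonzero polynomial in $\mathbb F[x]$. Then $d(f(x))=|(\mathbb F[x])'/P_{J([f(x)]_\sim)}|$, where $(\mathbb F[x])'=\mathbb F[x]_{mult}/\sim$.
   Context: $\mathbb F[x]_{mult}$ is the multiplicative semigroup of $\mathbb F[x]$; $\sim$ is the associate relation, a congruence on it; $[g]_\sim$ is the $\sim$-class of $g$. $J([f(x)]_\sim)$ is the ideal of the semigroup $(\mathbb F[x])'$ generated by $[f(x)]_\sim$. For a semigroup $S$, $H\subseteq S$, $a\in S$: $H\dots a=\{(u,v)\in S\times S: uav\in H\}$ and $P_H=\{(a,b)\in S\times S: H\dots a=H\dots b\}$. $d(f(x))$ is the number of pairwise non-associated divisors of $f(x)$ in $\mathbb F[x]$. *)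

theory Defs
  imports "HOL-Computational_Algebra.Polynomial"
begin

definition assoc_rel :: "('a::comm_semiring_1) rel" where
  "assoc_rel = {(g, h). g dvd h \<and> h dvd g}"

text \<open>Carrier of (F[x])' = F[x]_mult / ~ : the set of associate classes.\<close>
definition polyQ :: "('a::field poly) set set" where
  "polyQ = UNIV // assoc_rel"

definition qmult :: "('a::field poly) set \<Rightarrow> 'a poly set \<Rightarrow> 'a poly set" where
  "qmult A B = (\<Union>a\<in>A. \<Union>b\<in>B. assoc_rel `` {a * b})"

definition sg_ideal_gen :: "'s set \<Rightarrow> ('s \<Rightarrow> 's \<Rightarrow> 's) \<Rightarrow> 's set \<Rightarrow> 's set" where
  "sg_ideal_gen S m X =
     X \<union> {m s x | s x. s \<in> S \<and> x \<in> X} \<union> {m x t | x t. x \<in> X \<and> t \<in> S}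
       \<union> {m (m s x) t | s x t. s \<in> S \<and> x \<in> X \<and> t \<in> S}"

definition sg_residual :: "'s set \<Rightarrow> ('s \<Rightarrow> 's \<Rightarrow> 's) \<Rightarrow> 's set \<Rightarrow> 's \<Rightarrow> ('s \<times> 's) set" where
  "sg_residual S m H a = {(u, v). u \<in> S \<and> v \<in> S \<and> m (m u a) v \<in> H}"

definition sg_P :: "'s set \<Rightarrow> ('s \<Rightarrow> 's \<Rightarrow> 's) \<Rightarrow> 's set \<Rightarrow> 's rel" where
  "sg_P S m H = {(a, b). a \<in> S \<and> b \<in> S \<and> sg_residual S m H a = sg_residual S m H b}"

definition num_divisors :: "'a::field poly \<Rightarrow> nat" where
  "num_divisors f = card ({g. g dvd f} // assoc_rel)"

end

theory Submission
  imports Defs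
begin

lemma card_quot_fiber:
  assumes "\<And>x. x \<in> A \<Longrightarrow> R``{x} = {y\<in>A. h y = h x}"
  shows "card (A // R) = card (h ` A)"
proof -
  have eq: "A // R = (\<lambda>z. {y\<in>A. h y = z}) ` (h ` A)"
    unfolding quotient_def using assms by auto
  have "inj_on (\<lambda>z. {y\<in>A. h y = z}) (h ` A)"
    by (rule inj_onI) blast
  then show ?thesis using eq card_image by metis
qed

definition cls :: "'a::field poly \<Rightarrow> 'a poly set" where
  "cls g = assoc_rel `` {g}"

lemma mem_cls: "y \<in> cls x \<longleftrightarrow> x dvd y \<and> y dvd x"
  unfolding cls_def assoc_rel_def by auto

lemma cls_eq: "cls x = cls y \<longleftrightarrow> x dvd y \<and> y dvd x"
proof
  assume "cls x = cls y"
  moreover have "y \<in> cls y" by (simp add: mem_cls)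
  ultimately have "y \<in> cls x" by simp
  then show "x dvd y \<and> y dvd x" by (simp add: mem_cls)
next
  assume "x dvd y \<and> y dvd x"
  then show "cls x = cls y" unfolding set_eq_iff mem_cls by (blast intro: dvd_trans)
qed

lemma polyQ_eq: "polyQ = range cls"
  unfolding polyQ_def quotient_def cls_def by auto

lemma qmult_cls: "qmult (cls a) (cls b) = cls (a * b)"
proof -
  have "\<And>a' b'. a' \<in> cls a \<Longrightarrow> b' \<in> cls b \<Longrightarrow> assoc_rel `` {a' * b'} = cls (a*b)"
  proof -
    fix a' b' assume "a' \<in> cls a" "b' \<in> cls b"
    then have "a dvd a'" "a' dvd a" "b dvd b'" "b' dvd b" by (simp_all add: mem_cls)
    then have "a' * b' dvd a * b \<and> a * b dvd a' * b'" by (simp add: mult_dvd_mono)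
    then show "assoc_rel `` {a' * b'} = cls (a*b)" unfolding cls_def[symmetric] cls_eq .
  qed
  moreover have "a \<in> cls a" "b \<in> cls b" by (auto simp: mem_cls)
  ultimately show ?thesis unfolding qmult_def by blast
qed

lemma J_cases: "X \<in> sg_ideal_gen polyQ qmult {cls (f::'a::field poly)} \<Longrightarrow> X = cls f \<or> (\<exists>s. X = qmult (cls s) (cls f)) \<or> (\<exists>t. X = qmult (cls f) (cls t)) \<or> (\<exists>s t. X = qmult (qmult (cls s) (cls f)) (cls t))"
  unfolding sg_ideal_gen_def polyQ_eq by auto

lemma J_eq:
  "sg_ideal_gen polyQ qmult {cls f} = {cls x | x. f dvd x}"
proof
  show "sg_ideal_gen polyQ qmult {cls f} \<subseteq> {cls x | x. f dvd x}"
  proof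
    fix X assume "X \<in> sg_ideal_gen polyQ qmult {cls f}"
    then consider "X = cls f" | s where "X = qmult (cls s) (cls f)"
      | t where "X = qmult (cls f) (cls t)"
      | s t where "X = qmult (qmult (cls s) (cls f)) (cls t)"
      using J_cases by blast
    then show "X \<in> {cls x | x. f dvd x}"
    proof cases
      case 1 moreover have "f dvd f" by simp
      ultimately show ?thesis by blast
    next
      case (2 s) then have "X = cls (s * f)" by (simp add: qmult_cls)
      moreover have "f dvd s * f" by simp
      ultimately show ?thesis by blast
    next
      case (3 t) then have "X = cls (f * t)" by (simp add: qmult_cls)
      moreover have "f dvd f * t" by simp
      ultimately show ?thesis by blast
    next
      case (4 s t) then have "X = cls (s * f * t)" by (simp add: qmult_cls)
      moreover have "f dvd s * f * t" by simp
      ultimately show ?thesis by blast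
    qed
  qed
next
  show "{cls x | x. f dvd x} \<subseteq> sg_ideal_gen polyQ qmult {cls f}"
  proof
    fix X assume "X \<in> {cls x | x. f dvd x}"
    then obtain h where X: "X = cls (f * h)" by blast
    have "X = qmult (cls h) (cls f)" using X by (simp add: qmult_cls mult.commute)
    moreover have "cls h \<in> polyQ" unfolding polyQ_eq by simp
    ultimately have "X \<in> {qmult s x | s x. s \<in> polyQ \<and> x \<in> {cls f}}" by blast
    then show "X \<in> sg_ideal_gen polyQ qmult {cls f}"
      unfolding sg_ideal_gen_def by (intro UnI1 UnI2)
  qed
qed

lemma cls_in_J: "cls x \<in> {cls y | y. (f::'a::field poly) dvd y} \<longleftrightarrow> f dvd x"
proof
  assume "cls x \<in> {cls y | y. f dvd y}"
  then obtain y where "cls x = cls y" "f dvd y" by auto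
  then show "f dvd x" unfolding cls_eq
    using dvd_trans by blast
qed auto

definition Res :: "'a::field poly \<Rightarrow> 'a poly \<Rightarrow> ('a poly set \<times> 'a poly set) set" where
  "Res f a = sg_residual polyQ qmult (sg_ideal_gen polyQ qmult {cls f}) (cls a)"

lemma Res_mem: "(cls u, cls v) \<in> Res f a \<longleftrightarrow> f dvd u * a * v"
proof -
  have "(cls u, cls v) \<in> Res f a \<longleftrightarrow> cls (u*a*v) \<in> {cls x |x. f dvd x}"
    unfolding Res_def sg_residual_def J_eq by (simp add: qmult_cls polyQ_eq)
  then show ?thesis using cls_in_J[of "u*a*v" f] by (simp only:)
qed

lemma Res_sub: "Res f a \<subseteq> range cls \<times> range cls"
  unfolding Res_def sg_residual_def polyQ_eq by auto

lemma Res_eq_iff: "Res f a = Res f b \<longleftrightarrow> (\<forall>u v. f dvd u * a * v \<longleftrightarrow> f dvd u * b * v)"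
proof
  assume "Res f a = Res f b"
  then show "\<forall>u v. f dvd u * a * v \<longleftrightarrow> f dvd u * b * v" using Res_mem by metis
next
  assume H: "\<forall>u v. f dvd u * a * v \<longleftrightarrow> f dvd u * b * v"
  show "Res f a = Res f b"
  proof (rule set_eqI)
    fix p
    show "p \<in> Res f a \<longleftrightarrow> p \<in> Res f b"
    proof (cases "p \<in> range cls \<times> range cls")
      case True
      then obtain u v where "p = (cls u, cls v)" by auto
      then show ?thesis using Res_mem H by metis
    next
      case False then show ?thesis using Res_sub by blast
    qed
  qed
qed

definition Ann :: "'a::field poly \<Rightarrow> 'a poly \<Rightarrow> 'a poly set" where
  "Ann f a = {w. f dvd w * a}"

lemma Res_eq_Ann: "Res f a = Res f b \<longleftrightarrow> Ann f a = Ann f b"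
proof -
  have "(\<forall>u v. f dvd u * a * v \<longleftrightarrow> f dvd u * b * v) \<longleftrightarrow> (\<forall>w. f dvd w * a \<longleftrightarrow> f dvd w * b)"
  proof
    assume "\<forall>u v. f dvd u * a * v \<longleftrightarrow> f dvd u * b * v"
    then show "\<forall>w. f dvd w * a \<longleftrightarrow> f dvd w * b" by (metis mult_1_right)
  next
    assume "\<forall>w. f dvd w * a \<longleftrightarrow> f dvd w * b"
    then show "\<forall>u v. f dvd u * a * v \<longleftrightarrow> f dvd u * b * v"
      by (metis mult.commute mult.assoc)
  qed
  then show ?thesis using Res_eq_iff unfolding Ann_def by auto
qed

lemma Ann_principal:
  assumes "(f::'a::field poly) \<noteq> 0"
  shows "\<exists>m. m dvd f \<and> Ann f a = {w. m dvd w}"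
proof -
  have ex: "\<exists>w. w \<in> Ann f a \<and> w \<noteq> 0" using assms unfolding Ann_def by (intro exI[of _ f]) auto
  obtain m where m: "m \<in> Ann f a" "m \<noteq> 0"
    and mmin: "\<And>w. w \<in> Ann f a \<Longrightarrow> w \<noteq> 0 \<Longrightarrow> degree m \<le> degree w"
  proof -
    from ex obtain k where "k \<in> Ann f a \<and> k \<noteq> 0" by blast
    from ex_has_least_nat[where P="\<lambda>w. w \<in> Ann f a \<and> w \<noteq> 0" and m=degree, OF this]
    obtain m where "(m \<in> Ann f a \<and> m \<noteq> 0) \<and> (\<forall>y. y \<in> Ann f a \<and> y \<noteq> 0 \<longrightarrow> degree m \<le> degree y)"
      by blast
    then show ?thesis using that by blast
  qed
  have "Ann f a = {w. m dvd w}"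
  proof (rule set_eqI, rule iffI)
    fix w assume w: "w \<in> Ann f a"
    have "w mod m = w - (w div m) * m" by (simp add: minus_div_mult_eq_mod)
    then have "(w mod m) * a = (w - (w div m) * m) * a" by simp
    also have "\<dots> = w * a - (w div m) * (m * a)" by (simp add: algebra_simps)
    finally have "(w mod m) * a = w * a - (w div m) * (m * a)" .
    moreover have "f dvd w * a" "f dvd m * a" using w m unfolding Ann_def by auto
    ultimately have "f dvd (w mod m) * a" by (simp add: dvd_diff)
    then have "w mod m \<in> Ann f a" unfolding Ann_def by simp
    have "w mod m = 0"
    proof (rule ccontr)
      assume "w mod m \<noteq> 0"
      then have "degree (w mod m) < degree m" using degree_mod_less m(2) by blast
      with mmin[OF \<open>w mod m \<in> Ann f a\<close> \<open>w mod m \<noteq> 0\<close>] show False by simp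
    qed
    then show "w \<in> {w. m dvd w}" by (simp add: mod_eq_0_iff_dvd)
  next
    fix w assume "w \<in> {w. m dvd w}"
    then obtain k where k: "w = m * k" by auto
    have "f dvd m * a" using m(1) unfolding Ann_def by simp
    then have "f dvd k * (m * a)" by (rule dvd_mult)
    moreover have "k * (m * a) = w * a" using k by (simp add: ac_simps)
    ultimately show "w \<in> Ann f a" unfolding Ann_def by simp
  qed
  moreover have "f \<in> Ann f a" unfolding Ann_def by simp
  moreover have "m dvd f" using calculation by blast
  ultimately show ?thesis by blast
qed

lemma Ann_div:
  assumes "(f::'a::field poly) \<noteq> 0" "g dvd f"
  shows "Ann f (f div g) = {w. g dvd w}"
proof -
  have f: "f = (f div g) * g" using assms(2) by simp
  have q: "f div g \<noteq> 0" using f assms(1) by auto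
  have "f dvd w * (f div g) \<longleftrightarrow> g dvd w" for w
  proof -
    have "f dvd w * (f div g) \<longleftrightarrow> (f div g) * g dvd (f div g) * w"
      using f by (metis mult.commute)
    also have "\<dots> \<longleftrightarrow> g dvd w" using q by simp
    finally show ?thesis .
  qed
  then show ?thesis unfolding Ann_def by auto
qed

lemma card_image_eqv:
  assumes "\<And>a b. a \<in> A \<Longrightarrow> b \<in> A \<Longrightarrow> F a = F b \<longleftrightarrow> G a = G b"
  shows "card (F ` A) = card (G ` A)"
proof -
  define R where "R = {(a,b). a \<in> A \<and> b \<in> A \<and> F a = F b}"
  have "card (A // R) = card (F ` A)" by (rule card_quot_fiber) (auto simp: R_def)
  moreover have "card (A // R) = card (G ` A)" by (rule card_quot_fiber) (auto simp: R_def assms)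
  ultimately show ?thesis by simp
qed

theorem theorem5:
  fixes f :: "'a::field poly"
  assumes "f \<noteq> 0"
  shows "num_divisors f =
    card (polyQ // sg_P polyQ qmult (sg_ideal_gen polyQ qmult {assoc_rel `` {f}}))"
proof -
  define M :: "'a poly \<Rightarrow> 'a poly set" where "M g = {w. g dvd w}" for g
  define r where "r = sg_residual polyQ qmult (sg_ideal_gen polyQ qmult {cls f})"
  have rR: "r (cls a) = Res f a" for a unfolding r_def Res_def by simp
  have "card (polyQ // sg_P polyQ qmult (sg_ideal_gen polyQ qmult {cls f})) = card (r ` polyQ)"
    by (rule card_quot_fiber) (auto simp: sg_P_def r_def)
  also have "r ` polyQ = Res f ` UNIV" unfolding polyQ_eq using rR by (auto simp: image_iff)
  also have "card (Res f ` UNIV) = card (Ann f ` UNIV)"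
    by (rule card_image_eqv) (simp add: Res_eq_Ann)
  also have "Ann f ` UNIV = M ` {g. g dvd f}"
  proof
    show "Ann f ` UNIV \<subseteq> M ` {g. g dvd f}"
      using Ann_principal[OF assms] unfolding M_def by blast
    show "M ` {g. g dvd f} \<subseteq> Ann f ` UNIV"
      using Ann_div[OF assms] unfolding M_def by (auto simp: image_iff)
  qed
  finally have A: "card (polyQ // sg_P polyQ qmult (sg_ideal_gen polyQ qmult {cls f})) = card (M ` {g. g dvd f})" .
  have Meq: "M x = M y \<longleftrightarrow> x dvd y \<and> y dvd x" for x y
  proof
    assume "M x = M y"
    moreover have "x \<in> M x" "y \<in> M y" unfolding M_def by simp_all
    ultimately have "y \<in> M x" "x \<in> M y" by simp_all
    then show "x dvd y \<and> y dvd x" unfolding M_def by simp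
  next
    assume "x dvd y \<and> y dvd x"
    then show "M x = M y" unfolding M_def by (auto intro: dvd_trans)
  qed
  have "num_divisors f = card (M ` {g. g dvd f})"
    unfolding num_divisors_def
    by (rule card_quot_fiber) (auto simp: assoc_rel_def Meq intro: dvd_trans)
  then show ?thesis using A unfolding cls_def by simp
qed

end
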